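(* Let $r\in(r_-,0)\cup(r_+,\infty)$, where $r_\pm=(11\pm5\sqrt5)/2$. Then $T^2$ maps the bounded connected component of $E_r$ into the unbounded connected component of $E_r$.
   Context: $T(x,y)=\bigg(\dfrac{(1+y)(1+x-xy)^2}{(1+x)(-1-y+xy)(1+x-y^2)},\ \dfrac{(x-y)^2(1+x+y)}{(1+y-x^2)(1+x-y^2)}\bigg)$. $E_r\subset\mathbb{RP}^2$ is the real projective curve given by the homogenization of $(x+1)(y+1)(x+y+1)-rxy=0$, i.e. the level set $I=r$ of $I(x,y)=\frac{(x+1)(y+1)(x+y+1)}{xy}$. For these $r$, $E_r$ has exactly two connected components, one bounded (its intersection with the affine plane is bounded) and one unbounded. $T^2$ preserves the set $E_r$ (where defined). *)

theory Defs
  imports "HOL-Analysis.Analysis"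
begin

text \<open>The rational map T, written on the affine chart (points of real x real).\<close>
definition T :: "real \<times> real \<Rightarrow> real \<times> real" where
  "T p = (let x = fst p; y = snd p in
     ((1 + y) * (1 + x - x*y)^2 / ((1 + x) * (-1 - y + x*y) * (1 + x - y^2)),
      (x - y)^2 * (1 + x + y) / ((1 + y - x^2) * (1 + x - y^2))))"

definition T_defined_at :: "real \<times> real \<Rightarrow> bool" where
  "T_defined_at p = (let x = fst p; y = snd p in
     (1 + x) * (-1 - y + x*y) * (1 + x - y^2) \<noteq> 0 \<and>
     (1 + y - x^2) * (1 + x - y^2) \<noteq> 0)"

definition T2_defined_at :: "real \<times> real \<Rightarrow> bool" where
  "T2_defined_at p = (T_defined_at p \<and> T_defined_at (T p))"

text \<open>Affine part of E_r: zero set of (x+1)(y+1)(x+y+1) - r x y.\<close>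
definition E_aff :: "real \<Rightarrow> (real \<times> real) set" where
  "E_aff r = {p. (fst p + 1) * (snd p + 1) * (fst p + snd p + 1) - r * fst p * snd p = 0}"

definition r_minus :: real where "r_minus = (11 - 5 * sqrt 5) / 2"
definition r_plus :: real where "r_plus = (11 + 5 * sqrt 5) / 2"

end

theory Submission
  imports Defs "HOL-Library.Quadratic_Discriminant"
begin


definition NN :: "real \<times> real \<Rightarrow> real" where
  "NN p = (fst p + 1) * (snd p + 1) * (fst p + snd p + 1)"

lemma gen_ident:
  fixes a e g h n1 n2 m1 m2 m3 N0 k :: real
  assumes nz: "a\<noteq>0" "e\<noteq>0" "g\<noteq>0" "h\<noteq>0"
    and i1: "a*e*g + n1 = m1" and i2: "h*g + n2 = m2" and i3: "a*e*g*h + n1*h + n2*a*e = m3*g"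
    and i4: "m1*m2*m3*N0 = k*n1*n2*a*e*h"
  shows "(n1/(a*e*g) + 1)*(n2/(h*g) + 1)*(n1/(a*e*g) + n2/(h*g) + 1) * N0 = k * (n1/(a*e*g)) * (n2/(h*g))"
proof -
  have e1: "n1/(a*e*g) + 1 = m1/(a*e*g)" using nz i1 by (simp add: field_simps)
  have e2: "n2/(h*g) + 1 = m2/(h*g)" using nz i2 by (simp add: field_simps)
  have e3: "n1/(a*e*g) + n2/(h*g) + 1 = m3/(a*e*h)"
  proof -
    have "n1/(a*e*g) + n2/(h*g) + 1 = (a*e*g*h + n1*h + n2*a*e)/(a*e*g*h)"
      using nz by (simp add: field_simps)
    also have "\<dots> = m3/(a*e*h)" using nz i3 by (simp add: field_simps)
    finally show ?thesis .
  qed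
  have "m1/(a*e*g) * (m2/(h*g)) * (m3/(a*e*h)) * N0 = (m1*m2*m3*N0) / ((a*e*g)*(h*g)*(a*e*h))"
    by (simp add: field_simps)
  also have "\<dots> = (k*n1*n2*a*e*h) / ((a*e*g)*(h*g)*(a*e*h))" by (simp only: i4)
  also have "\<dots> = k * (n1/(a*e*g)) * (n2/(h*g))" using nz by (simp add: field_simps)
  finally show ?thesis using e1 e2 e3 by simp
qed

lemma Ident:
  fixes x y :: real
  assumes "T_defined_at (x,y)"
  shows "NN (T (x,y)) * NN (x,y) = - (x*y) * fst (T (x,y)) * snd (T (x,y))"
proof -
  from assms have nz: "1 + x \<noteq> 0" "-1 - y + x*y \<noteq> 0" "1 + x - y^2 \<noteq> 0" "1 + y - x^2 \<noteq> 0"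
    by (auto simp: T_defined_at_def)
  have i1: "(1 + x) * (-1 - y + x*y) * (1 + x - y^2) + (1 + y) * (1 + x - x*y)^2 = - (x - y) * (1 + y - x^2) * y"
    by algebra
  have i2: "(1 + y - x^2) * (1 + x - y^2) + (x - y)^2 * (1 + x + y) = (1 + x - x*y) * (1 + y - x*y)"
    by algebra
  have i3: "(1 + x) * (-1 - y + x*y) * (1 + x - y^2) * (1 + y - x^2) + ((1 + y) * (1 + x - x*y)^2)*(1 + y - x^2)
    + ((x - y)^2 * (1 + x + y))*(1+x)*(-1 - y + x*y) = (- (1 + x - x*y) * (x - y) * x) * (1 + x - y^2)"
    by algebra
  have i4: "(- (x - y) * (1 + y - x^2) * y) * ((1 + x - x*y) * (1 + y - x*y)) * (- (1 + x - x*y) * (x - y) * x)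
     * ((x + 1) * (y + 1) * (x + y + 1))
     = (-(x*y)) * ((1 + y) * (1 + x - x*y)^2) * ((x - y)^2 * (1 + x + y)) * (1 + x) * (-1 - y + x*y) * (1 + y - x^2)"
    by algebra
  show ?thesis
    unfolding NN_def T_def Let_def fst_conv snd_conv
    using gen_ident[OF nz(1) nz(2) nz(3) nz(4) i1 i2 i3 i4] by simp
qed
lemma E_iff: "(x,y) \<in> E_aff r \<longleftrightarrow> NN (x,y) = r*x*y"
  by (auto simp: E_aff_def NN_def)

lemma T2_in_E:
  assumes q: "q \<in> E_aff r" and r: "r \<noteq> 0" and nz: "fst q \<noteq> 0" "snd q \<noteq> 0"
    and d: "T2_defined_at q"
  shows "T (T q) \<in> E_aff r"
proof -
  obtain x y where qd: "q = (x,y)" by (cases q)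
  obtain X Y where Pd: "T q = (X,Y)" by (cases "T q")
  obtain X2 Y2 where P2d: "T (X,Y) = (X2,Y2)" by (cases "T (X,Y)")
  have d1: "T_defined_at (x,y)" and d2: "T_defined_at (X,Y)" using d qd Pd by (auto simp: T2_defined_at_def)
  have x0: "x \<noteq> 0" "y \<noteq> 0" using nz qd by auto
  have Nq: "NN (x,y) = r*x*y" using q qd E_iff by auto
  have h1: "NN (X,Y) * NN (x,y) = - (x*y) * X * Y" using Ident[OF d1] Pd qd by simp
  have NP: "NN (X,Y) * r = - (X*Y)"
  proof -
    have "(NN (X,Y) * r) * (x*y) = (- (X*Y)) * (x*y)" using h1 Nq by (simp add: algebra_simps)
    then show ?thesis using x0 by (metis mult_cancel_right mult_minus_left no_zero_divisors)
  qed
  have X0: "X \<noteq> 0"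
  proof
    assume "X = 0"
    then have "(Y+1)*(Y+1) = 0" using NP r by (simp add: NN_def)
    then have "Y = -1" by simp
    then show False using d2 \<open>X = 0\<close> by (simp add: T_defined_at_def)
  qed
  have Y0: "Y \<noteq> 0"
  proof
    assume "Y = 0"
    then have "(X+1)*(X+1) = 0" using NP r by (simp add: NN_def)
    then have "X = -1" by simp
    then show False using d2 \<open>Y = 0\<close> by (simp add: T_defined_at_def)
  qed
  have h2: "NN (X2,Y2) * NN (X,Y) = - (X*Y) * X2 * Y2" using Ident[OF d2] P2d by simp
  have "(NN (X2,Y2)) * (- (X*Y)) = (r*X2*Y2) * (- (X*Y))"
  proof -
    have "NN (X2,Y2) * (- (X*Y)) = NN (X2,Y2) * (NN (X,Y) * r)" using NP by simp
    also have "\<dots> = r * (- (X*Y) * X2 * Y2)" using h2 by (simp add: algebra_simps)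
    finally show ?thesis by (simp add: algebra_simps)
  qed
  then have "NN (X2,Y2) = r*X2*Y2" using X0 Y0 by simp
  then show ?thesis using E_iff Pd P2d by simp
qed


lemma lx: fixes x y :: real assumes "y < 0" "x*y-1-y > 0" "1+x+y > 0" shows False
proof -
  have "x - 1 > -2 - y" using assms by linarith
  then have "y*(x-1) < y*(-2-y)" using assms(1) by (simp add: mult_strict_left_mono_neg)
  then have "(y+1)^2 < 0" using assms(2) by (simp add: power2_eq_square algebra_simps)
  then show False using zero_le_power2[of "y+1"] by linarith
qed

lemma ly: fixes x y :: real assumes "y > 0" "x*y-1-y > 0" "1+y-x^2 > 0" "1+x-y^2>0" shows False
proof -
  have xy: "x*y > 1 + y" using assms by simp
  then have "x > 0" using assms(1) mult_nonpos_nonneg[of x y] by (cases "x > 0") auto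
  have "x*x < x*y" using xy assms(3) by (simp add: power2_eq_square)
  then have "x < y" using \<open>x>0\<close> by simp
  have "y*y < 1 + y" using assms(4) \<open>x<y\<close> by (simp add: power2_eq_square)
  have "x*y < y*y" using \<open>x<y\<close> assms(1) by (simp add: mult_strict_right_mono)
  then show False using xy \<open>y*y < 1 + y\<close> by linarith
qed

lemma leaf1: fixes x y :: real assumes "1+x-y^2>0" "1+x>0" "1+y>0" "x*y-1-y>0" "1+x+y<0" "1+y-x^2<0"
  shows False
proof -
  have y0: "y < 0" using assms by linarith
  have "x*y > 1+y" using assms(4) by simp
  then have x0: "x < 0" using y0 assms(3) mult_nonneg_nonpos[of x y] by (cases "x < 0") auto
  have xg: "x > y^2 - 1" using assms(1) by simp
  have "-x < 1 - y^2" using xg by simp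
  then have "(-x)^2 < (1-y^2)^2" using x0 by (intro power_strict_mono) auto
  then have "1 + y < (1-y^2)^2" using assms(6) by simp
  also have "(1-y^2)^2 = (1+y)*((1+y)*(1-y)^2)" by (simp add: power2_eq_square algebra_simps)
  finally have "1 < (1+y)*(1-y)^2" using assms(3) by simp
  then have A: "y*(y^2-y-1) > 0" by (simp add: power2_eq_square algebra_simps)
  have "x*y < (y^2-1)*y" using xg y0 by (simp add: mult_strict_right_mono_neg)
  then have "(y+1)*(y^2-y-1) > 0" using assms(4) by (simp add: power2_eq_square algebra_simps)
  then have "y^2-y-1 > 0" using assms(3) by (simp add: zero_less_mult_iff)
  then show False using A y0 by (simp add: zero_less_mult_iff)
qed

lemma leaf2: fixes x y :: real assumes "1+x-y^2<0" "1+x>0" "1+y>0" "x*y-1-y<0" "1+x+y>0" "1+y-x^2<0"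
  shows False
proof (cases "x > 0 \<and> y > 0")
  case True
  have e: "y*(x-1) < 1" using assms(4) by (simp add: algebra_simps)
  show False
  proof (cases "x \<le> y")
    case True
    have "x*x > 1 + x" using assms(6) True by (simp add: power2_eq_square)
    have "x > 1"
    proof (rule ccontr)
      assume "\<not> x > 1"
      then have "x*x \<le> 1*x" using \<open>x > 0 \<and> y > 0\<close> by (intro mult_right_mono) auto
      then show False using \<open>x*x > 1 + x\<close> by simp
    qed
    have "x*(x-1) \<le> y*(x-1)" using True \<open>x>1\<close> by (simp add: mult_right_mono)
    then show False using e \<open>x*x > 1 + x\<close> by (simp add: algebra_simps)
  next
    case False
    have "y*y > 1 + y" using assms(1) False by (simp add: power2_eq_square)
    have "y*(y-1) < y*(x-1)" using False \<open>x > 0 \<and> y > 0\<close> by (simp add: mult_strict_left_mono)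
    then show False using e \<open>y*y > 1 + y\<close> by (simp add: algebra_simps)
  qed
next
  case False
  then consider "x \<le> 0" | "y \<le> 0" "x > 0" by linarith
  then show False
  proof cases
    case 1
    have "x*(x+1) \<le> 0" using 1 assms(2) mult_nonpos_nonneg[of x "x+1"] by simp
    then have "x^2 \<le> -x" by (simp add: power2_eq_square algebra_simps)
    then show False using assms(5,6) by linarith
  next
    case 2
    have "y*(y+1) \<le> 0" using 2 assms(3) mult_nonpos_nonneg[of y "y+1"] by simp
    then have "y^2 \<le> -y" by (simp add: power2_eq_square algebra_simps)
    then show False using assms(1,3) 2 by linarith
  qed
qed

lemma leaf3: fixes x y :: real assumes "1+x-y^2<0" "1+x>0" "1+y>0" "x*y-1-y<0" "1+x+y<0" "1+y-x^2>0"
  shows False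
proof -
  have y0: "y < 0" using assms by linarith
  have xg: "x < y^2 - 1" using assms(1) by simp
  have "y*(y+1) < 0" using y0 assms(3) by (simp add: mult_neg_pos)
  then have "y*y < -y" by (simp add: algebra_simps)
  then have "y^2 < 1" using assms(3) by (simp add: power2_eq_square)
  have "1 - y^2 < -x" using xg by simp
  then have "(1-y^2)^2 < (-x)^2" using \<open>y^2<1\<close> by (intro power_strict_mono) auto
  then have "(1-y^2)^2 < 1 + y" using assms(6) by simp
  also have "(1-y^2)^2 = (1+y)*((1+y)*(1-y)^2)" by (simp add: power2_eq_square algebra_simps)
  finally have "(1+y)*(1-y)^2 < 1" using assms(3) by simp
  then have A: "y*(y^2-y-1) < 0" by (simp add: power2_eq_square algebra_simps)
  have "x*y > (y^2-1)*y" using xg y0 by (simp add: mult_strict_right_mono_neg)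
  then have "(y+1)*(y^2-y-1) < 0" using assms(4) by (simp add: power2_eq_square algebra_simps)
  then have "y^2-y-1 < 0" using assms(3) by (simp add: mult_less_0_iff)
  then show False using A y0 by (simp add: mult_less_0_iff)
qed

lemma leaf7: fixes x y :: real assumes "1+x-y^2>0" "1+y<0" "1+x+y<0" shows False
proof -
  have "y^2 + y < 0" using assms by linarith
  moreover have "y^2 + y = y*(y+1)" by (simp add: power2_eq_square algebra_simps)
  ultimately show False using assms(2) by (simp add: mult_less_0_iff)
qed

lemma leaf8: fixes x y :: real assumes "1+x<0" "1+y>0" "1+x+y>0" "x*y-1-y>0" shows False
proof -
  have "y > 0" "x - 1 < 0" using assms by linarith+
  then have "y*(x-1) < 0" by (simp add: mult_pos_neg)
  then show False using assms(4) by (simp add: algebra_simps)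
qed

lemma leaf9: fixes x y :: real assumes "1+x<0" "1+y-x^2>0" "x*y-1-y>0" shows False
proof -
  have "1 < -x" using assms(1) by simp
  then have "1*1 < (-x)*(-x)" by (intro mult_strict_mono) auto
  then have "x^2 > 1" by (simp add: power2_eq_square)
  then have "y > 0" using assms(2) by linarith
  have "y*(x-1) < 0" using \<open>y>0\<close> assms(1) by (simp add: mult_pos_neg)
  then show False using assms(3) by (simp add: algebra_simps)
qed

lemma K1:
  fixes x y :: real
  assumes P1: "0 < (1+y)*(1+x)*(x*y-1-y)*(1+x-y^2)" and P2: "0 < (1+x+y)*(1+y-x^2)*(1+x-y^2)"
  shows False
proof -
  define A B Ee G S H where "A = 1+x" "B = 1+y" "Ee = x*y-1-y" "G = 1+x-y^2" "S = 1+x+y" "H = 1+y-x^2"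
  note defs = this
  have q1: "0 < B*A*Ee*G" "0 < S*H*G" using P1 P2 defs by auto
  have f0: "y < 0 \<Longrightarrow> Ee > 0 \<Longrightarrow> S > 0 \<Longrightarrow> False" unfolding defs by (rule lx)
  have f0': "y > 0 \<Longrightarrow> Ee > 0 \<Longrightarrow> H > 0 \<Longrightarrow> G > 0 \<Longrightarrow> False" unfolding defs by (rule ly)
  have f00: "y = 0 \<Longrightarrow> Ee > 0 \<Longrightarrow> False" using defs by simp
  have f1: "G>0 \<Longrightarrow> A>0 \<Longrightarrow> B>0 \<Longrightarrow> Ee>0 \<Longrightarrow> S<0 \<Longrightarrow> H<0 \<Longrightarrow> False" unfolding defs by (rule leaf1)
  have f2: "G<0 \<Longrightarrow> A>0 \<Longrightarrow> B>0 \<Longrightarrow> Ee<0 \<Longrightarrow> S>0 \<Longrightarrow> H<0 \<Longrightarrow> False" unfolding defs by (rule leaf2)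
  have f3: "G<0 \<Longrightarrow> A>0 \<Longrightarrow> B>0 \<Longrightarrow> Ee<0 \<Longrightarrow> S<0 \<Longrightarrow> H>0 \<Longrightarrow> False" unfolding defs by (rule leaf3)
  have f7: "G>0 \<Longrightarrow> B<0 \<Longrightarrow> S<0 \<Longrightarrow> False" unfolding defs by (rule leaf7)
  have f8: "A<0 \<Longrightarrow> B>0 \<Longrightarrow> S>0 \<Longrightarrow> Ee>0 \<Longrightarrow> False" unfolding defs by (rule leaf8)
  have f9: "A<0 \<Longrightarrow> H>0 \<Longrightarrow> Ee>0 \<Longrightarrow> False" unfolding defs by (rule leaf9)
  have t1: "B<0 \<Longrightarrow> H>0 \<Longrightarrow> False" using defs zero_le_power2[of x] by linarith
  have t2: "G>0 \<Longrightarrow> A<0 \<Longrightarrow> False" using defs zero_le_power2[of y] by linarith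
  have t3: "A<0 \<Longrightarrow> B<0 \<Longrightarrow> S>0 \<Longrightarrow> False" using defs by linarith
  have t5: "y>0 \<Longrightarrow> B<0 \<Longrightarrow> False" using defs by simp
  show False
  proof (cases y "0::real" rule: linorder_cases)
    case less
    then show False using q1 f0 f1 f2 f3 f7 f8 f9 t1 t2 t3
      by (auto simp: zero_less_mult_iff mult_less_0_iff)
  next
    case equal
    then show False using q1 f00 f1 f2 f3 f7 f8 f9 t1 t2 t3
      by (auto simp: zero_less_mult_iff mult_less_0_iff)
  next
    case greater
    then show False using q1 t5 f0' f1 f2 f3 f7 f8 f9 t1 t2 t3
      by (auto simp: zero_less_mult_iff mult_less_0_iff)
  qed
qed


lemma K2:
  fixes x y :: real
  assumes D1: "0 < (x-y)*y*(1+x-x*y)*(1+x)" and D2: "(1+x-y^2)*(x-y)*x*(1+x) < 0"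
  shows False
proof -
  define A Dd U G where "A = 1+x" "Dd = x-y" "U = 1+x-x*y" "G = 1+x-y^2"
  note defs = this
  have q: "0 < Dd*y*U*A" "G*Dd*x*A < 0" using D1 D2 defs by auto
  have k1: "Dd>0 \<Longrightarrow> y>0 \<Longrightarrow> U>0 \<Longrightarrow> G<0 \<Longrightarrow> False"
  proof -
    assume h: "Dd>0" "y>0" "U>0" "G<0"
    have "y*y > 1 + y" using h defs by (simp add: power2_eq_square)
    have "x*(y-1) < 1" using h defs by (simp add: algebra_simps)
    have "y > 1"
    proof (rule ccontr)
      assume "\<not> y > 1"
      then have "y*y \<le> 1*y" using h(2) by (intro mult_right_mono) auto
      then show False using \<open>y*y > 1 + y\<close> by simp
    qed
    have "y*(y-1) < x*(y-1)" using h defs \<open>y>1\<close> by (simp add: mult_strict_right_mono)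
    then show False using \<open>x*(y-1) < 1\<close> \<open>y*y > 1 + y\<close> by (simp add: algebra_simps)
  qed
  have k4: "G>0 \<Longrightarrow> U<0 \<Longrightarrow> y<0 \<Longrightarrow> Dd>0 \<Longrightarrow> False"
  proof -
    assume h: "G>0" "U<0" "y<0" "Dd>0"
    have "y*y < x*y" using h defs unfolding power2_eq_square by linarith
    then have "y > x" using h(3) by (simp add: mult_less_cancel_right)
    then show False using h defs by simp
  qed
  have k5: "G>0 \<Longrightarrow> U<0 \<Longrightarrow> y>0 \<Longrightarrow> Dd<0 \<Longrightarrow> False"
  proof -
    assume h: "G>0" "U<0" "y>0" "Dd<0"
    have "y*y < x*y" using h defs unfolding power2_eq_square by linarith
    then have "y < x" using h(3) by (simp add: mult_less_cancel_right)
    then show False using h defs by simp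
  qed
  have k8: "G<0 \<Longrightarrow> U>0 \<Longrightarrow> y<0 \<Longrightarrow> Dd<0 \<Longrightarrow> False"
  proof -
    assume h: "G<0" "U>0" "y<0" "Dd<0"
    have "y*y > x*y" using h defs unfolding power2_eq_square by linarith
    then have "y < x" using h(3) by (simp add: mult_less_cancel_right)
    then show False using h defs by simp
  qed
  have u1: "x>0 \<Longrightarrow> y<0 \<Longrightarrow> U>0"
  proof -
    assume "x>0" "y<0" then have "x*y < 0" by (simp add: mult_pos_neg)
    then show "U>0" using defs \<open>x>0\<close> by simp
  qed
  have u2: "x<0 \<Longrightarrow> y>0 \<Longrightarrow> A>0 \<Longrightarrow> U>0"
  proof -
    assume "x<0" "y>0" "A>0" then have "x*y < 0" by (simp add: mult_neg_pos)
    then show "U>0" using defs \<open>A>0\<close> by simp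
  qed
  have u3: "A<0 \<Longrightarrow> y<0 \<Longrightarrow> U<0"
  proof -
    assume "A<0" "y<0" then have "x<0" using defs by simp
    then have "x*y > 0" using \<open>y<0\<close> by (simp add: mult_neg_neg)
    then show "U<0" using defs \<open>A<0\<close> by simp
  qed
  have t1: "G>0 \<Longrightarrow> A>0"
  proof -
    assume "G>0" moreover have "y^2 \<ge> 0" by simp
    ultimately show "A>0" using defs by linarith
  qed
  have t2: "x > 0 \<Longrightarrow> A > 0" using defs by simp
  have t3: "Dd > 0 \<Longrightarrow> x < 0 \<Longrightarrow> y < 0" using defs by simp
  have t4: "Dd < 0 \<Longrightarrow> x > 0 \<Longrightarrow> y > 0" using defs by simp
  show False
  proof (cases x "0::real" rule: linorder_cases)
    case less
    then show False using q k1 k4 k5 k8 u1 u2 u3 t1 t2 t3 t4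
      by (auto simp: zero_less_mult_iff mult_less_0_iff)
  next
    case equal
    then show False using q by simp
  next
    case greater
    then show False using q k1 k4 k5 k8 u1 u2 u3 t1 t2 t3 t4
      by (auto simp: zero_less_mult_iff mult_less_0_iff)
  qed
qed

lemma pos_sq_cancel: fixes A k :: real assumes "0 < A * k^2" shows "0 < A"
  using assms by (metis mult_nonpos_nonneg zero_le_power2 not_less)

lemma neg_sq_cancel: fixes A k :: real assumes "A * k^2 < 0" shows "A < 0"
  using assms by (metis mult_nonneg_nonneg zero_le_power2 not_less)

lemma L1:
  assumes d: "T_defined_at P"
  shows "\<not> (fst (T P) > 0 \<and> snd (T P) > 0)"
proof
  assume h: "fst (T P) > 0 \<and> snd (T P) > 0"
  obtain x y where Pd: "P = (x,y)" by (cases P)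
  have X: "0 < (1 + y) * (1 + x - x*y)^2 / ((1 + x) * (-1 - y + x*y) * (1 + x - y^2))"
    and Y: "0 < (x - y)^2 * (1 + x + y) / ((1 + y - x^2) * (1 + x - y^2))"
    using h Pd by (auto simp: T_def Let_def)
  have "0 < ((1 + y) * (1 + x - x*y)^2) * ((1 + x) * (-1 - y + x*y) * (1 + x - y^2))"
    using X by (simp add: zero_less_divide_iff zero_less_mult_iff)
  then have "0 < ((1+y)*(1+x)*(x*y-1-y)*(1+x-y^2)) * (1 + x - x*y)^2"
    by (simp add: algebra_simps)
  then have P1: "0 < (1+y)*(1+x)*(x*y-1-y)*(1+x-y^2)" by (rule pos_sq_cancel)
  have "0 < ((x - y)^2 * (1 + x + y)) * ((1 + y - x^2) * (1 + x - y^2))"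
    using Y by (simp add: zero_less_divide_iff zero_less_mult_iff)
  then have "0 < ((1+x+y)*(1+y-x^2)*(1+x-y^2)) * (x-y)^2"
    by (simp add: algebra_simps)
  then have P2: "0 < (1+x+y)*(1+y-x^2)*(1+x-y^2)" by (rule pos_sq_cancel)
  show False using K1[OF P1 P2] .
qed

lemma divpos: fixes n D :: real assumes "0 < n/D" shows "0 < n*D"
  using assms by (auto simp: zero_less_divide_iff zero_less_mult_iff)

lemma divneg: fixes n D :: real assumes "n/D < 0" shows "n*D < 0"
  using assms by (auto simp: divide_less_0_iff mult_less_0_iff)

lemma gfrac1: fixes D n m :: real assumes "D \<noteq> 0" "D + n = m" shows "n/D + 1 = m/D"
  using assms by (simp add: field_simps)

lemma gfrac3: fixes a e g h n1 n2 m3 :: real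
  assumes "a\<noteq>0" "e\<noteq>0" "g\<noteq>0" "h\<noteq>0" "a*e*g*h + n1*h + n2*a*e = m3*g"
  shows "n1/(a*e*g) + n2/(h*g) + 1 = m3/(a*e*h)"
proof -
  have "n1/(a*e*g) + n2/(h*g) + 1 = (a*e*g*h + n1*h + n2*a*e)/(a*e*g*h)"
    using assms by (simp add: field_simps)
  also have "\<dots> = m3/(a*e*h)" using assms by (simp add: field_simps)
  finally show ?thesis .
qed

lemma L2:
  assumes d: "T_defined_at P"
  shows "\<not> (fst (T P) > -1 \<and> snd (T P) > -1 \<and> fst (T P) + snd (T P) < -1)"
proof
  assume h: "fst (T P) > -1 \<and> snd (T P) > -1 \<and> fst (T P) + snd (T P) < -1"
  obtain x y where Pd: "P = (x,y)" by (cases P)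
  from d Pd have nz: "1 + x \<noteq> 0" "-1 - y + x*y \<noteq> 0" "1 + x - y^2 \<noteq> 0" "1 + y - x^2 \<noteq> 0"
    by (auto simp: T_defined_at_def)
  have aeg: "(1 + x) * (-1 - y + x*y) * (1 + x - y^2) \<noteq> 0" using nz by simp
  have hg: "(1 + y - x^2) * (1 + x - y^2) \<noteq> 0" using nz by simp
  have aeh: "(1 + x) * (-1 - y + x*y) * (1 + y - x^2) \<noteq> 0" using nz by simp
  have i1: "(1 + x) * (-1 - y + x*y) * (1 + x - y^2) + (1 + y) * (1 + x - x*y)^2 = - (x - y) * (1 + y - x^2) * y"
    by algebra
  have i2: "(1 + y - x^2) * (1 + x - y^2) + (x - y)^2 * (1 + x + y) = (1 + x - x*y) * (1 + y - x*y)"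
    by algebra
  have i3: "(1 + x) * (-1 - y + x*y) * (1 + x - y^2) * (1 + y - x^2) + ((1 + y) * (1 + x - x*y)^2)*(1 + y - x^2)
    + ((x - y)^2 * (1 + x + y))*(1+x)*(-1 - y + x*y) = (- (1 + x - x*y) * (x - y) * x) * (1 + x - y^2)"
    by algebra
  define X Y where "X = (1 + y) * (1 + x - x*y)^2 / ((1 + x) * (-1 - y + x*y) * (1 + x - y^2))"
    and "Y = (x - y)^2 * (1 + x + y) / ((1 + y - x^2) * (1 + x - y^2))"
  have TP: "T P = (X,Y)" using Pd by (simp add: T_def Let_def X_def Y_def)
  have e1: "X + 1 = (- (x - y) * (1 + y - x^2) * y) / ((1 + x) * (-1 - y + x*y) * (1 + x - y^2))"
    unfolding X_def by (rule gfrac1[OF aeg i1])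
  have e2: "Y + 1 = ((1 + x - x*y) * (1 + y - x*y)) / ((1 + y - x^2) * (1 + x - y^2))"
    unfolding Y_def by (rule gfrac1[OF hg i2])
  have e3: "X + Y + 1 = (- (1 + x - x*y) * (x - y) * x) / ((1 + x) * (-1 - y + x*y) * (1 + y - x^2))"
    unfolding X_def Y_def by (rule gfrac3[OF nz(1) nz(2) nz(3) nz(4) i3])
  have F1: "0 < (- (x - y) * (1 + y - x^2) * y) * ((1 + x) * (-1 - y + x*y) * (1 + x - y^2))"
  proof -
    have "0 < X + 1" using h TP by simp
    then show ?thesis unfolding e1 by (rule divpos)
  qed
  have F2: "0 < ((1 + x - x*y) * (1 + y - x*y)) * ((1 + y - x^2) * (1 + x - y^2))"
  proof -
    have "0 < Y + 1" using h TP by simp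
    then show ?thesis unfolding e2 by (rule divpos)
  qed
  have F3: "(- (1 + x - x*y) * (x - y) * x) * ((1 + x) * (-1 - y + x*y) * (1 + y - x^2)) < 0"
  proof -
    have "X + Y + 1 < 0" using h TP by simp
    then show ?thesis unfolding e3 by (rule divneg)
  qed
  have "0 < ((- (x - y) * (1 + y - x^2) * y) * ((1 + x) * (-1 - y + x*y) * (1 + x - y^2)))
          * (((1 + x - x*y) * (1 + y - x*y)) * ((1 + y - x^2) * (1 + x - y^2)))"
    using F1 F2 by simp
  also have "\<dots> = ((x-y)*y*(1+x-x*y)*(1+x)) * ((-1 - y + x*y)*(1 + y - x^2)*(1 + x - y^2))^2"
    by algebra
  finally have D1: "0 < (x-y)*y*(1+x-x*y)*(1+x)" by (rule pos_sq_cancel)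
  have "(((1 + x - x*y) * (1 + y - x*y)) * ((1 + y - x^2) * (1 + x - y^2)))
          * ((- (1 + x - x*y) * (x - y) * x) * ((1 + x) * (-1 - y + x*y) * (1 + y - x^2))) < 0"
    using F2 F3 by (simp add: mult_pos_neg)
  also have "(((1 + x - x*y) * (1 + y - x*y)) * ((1 + y - x^2) * (1 + x - y^2)))
          * ((- (1 + x - x*y) * (x - y) * x) * ((1 + x) * (-1 - y + x*y) * (1 + y - x^2)))
       = ((1+x-y^2)*(x-y)*x*(1+x)) * ((1 + x - x*y)*(-1 - y + x*y)*(1 + y - x^2))^2"
    by algebra
  finally have D2: "(1+x-y^2)*(x-y)*x*(1+x) < 0" by (rule neg_sq_cancel)
  show False using K2[OF D1 D2] .
qed


definition qb :: "real \<Rightarrow> real \<Rightarrow> real" where "qb r x = (x+1)*(x+2) - r*x"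
definition DD :: "real \<Rightarrow> real \<Rightarrow> real" where "DD r x = discrim (x+1) (qb r x) ((x+1)^2)"
definition rt :: "real \<Rightarrow> real \<Rightarrow> real \<Rightarrow> real" where
  "rt r \<sigma> x = (-qb r x + \<sigma> * sqrt (DD r x)) / (2*(x+1))"

lemma E_quad: "(x,y) \<in> E_aff r \<longleftrightarrow> (x+1)*y^2 + qb r x * y + (x+1)^2 = 0"
proof -
  have "(x + 1) * (y + 1) * (x + y + 1) - r * x * y = (x+1)*y^2 + qb r x * y + (x+1)^2"
    unfolding qb_def by algebra
  then show ?thesis unfolding E_aff_def by (simp only: mem_Collect_eq fst_conv snd_conv)
qed

lemma bl_swap: "bounded_linear (prod.swap :: real \<times> real \<Rightarrow> real \<times> real)"
  by (rule bounded_linear_intro[where K=1]) (auto simp: norm_prod_def add.commute prod_eq_iff)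

lemma E_swap: "(x,y) \<in> E_aff r \<Longrightarrow> (y,x) \<in> E_aff r"
proof -
  have "(y + 1) * (x + 1) * (y + x + 1) - r * y * x = (x + 1) * (y + 1) * (x + y + 1) - r * x * y"
    by algebra
  then show "(x,y) \<in> E_aff r \<Longrightarrow> (y,x) \<in> E_aff r" by (simp add: E_aff_def)
qed

lemma rt_in: assumes "x+1 \<noteq> 0" "DD r x \<ge> 0" "\<sigma> = 1 \<or> \<sigma> = -1"
  shows "(x, rt r \<sigma> x) \<in> E_aff r"
  using assms discriminant_nonneg[of "x+1" "qb r x" "(x+1)^2" "rt r \<sigma> x"]
  unfolding E_quad by (auto simp: rt_def DD_def)

lemma rt_cases: assumes "x+1 \<noteq> 0" "(x,y) \<in> E_aff r"
  shows "\<exists>\<sigma>. (\<sigma> = 1 \<or> \<sigma> = -1) \<and> y = rt r \<sigma> x"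
proof -
  have eq: "(x+1)*y^2 + qb r x * y + (x+1)^2 = 0" using assms(2) E_quad by blast
  have "DD r x \<ge> 0"
  proof (rule ccontr)
    assume "\<not> DD r x \<ge> 0"
    then have "discrim (x+1) (qb r x) ((x+1)^2) < 0" by (simp add: DD_def)
    then show False using discriminant_negative[OF assms(1)] eq by blast
  qed
  then have "y = rt r 1 x \<or> y = rt r (-1) x"
    using discriminant_nonneg[OF assms(1), of "qb r x" "(x+1)^2" y] eq
    by (auto simp: rt_def DD_def)
  then show ?thesis by blast
qed

lemma rt_cont: assumes "\<forall>x\<in>I. x+1 \<noteq> 0" shows "continuous_on I (rt r \<sigma>)"
  unfolding rt_def DD_def qb_def discrim_def
  using assms by (auto intro!: continuous_intros)

lemma graph_conn: assumes "\<forall>x\<in>I. x+1 \<noteq> 0" "connected I"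
  shows "connected ((\<lambda>x. (x, rt r \<sigma> x)) ` I)"
  by (rule connected_continuous_image[OF _ assms(2)])
     (auto intro!: continuous_intros rt_cont assms(1))

lemma DD_pos_neg: assumes "x < -1" shows "DD r x > 0"
proof -
  have "(x+1)^3 < 0" using assms by (simp add: power_less_zero_eq)
  moreover have "DD r x = (qb r x)^2 - 4*(x+1)^3" by (simp add: DD_def discrim_def power2_eq_square power3_eq_cube)
  moreover have "(qb r x)^2 \<ge> 0" by simp
  ultimately show ?thesis by linarith
qed

lemma DD_nonneg: assumes "x \<ge> -1" "r*x \<le> 0" shows "DD r x \<ge> 0"
proof -
  have A0: "0 \<le> (x+1)*(x+2)" using assms(1) by simp
  have "(x+1)*(x+2) \<le> qb r x" using assms(2) by (simp add: qb_def)
  then have "((x+1)*(x+2))^2 \<le> (qb r x)^2" using A0 by (intro power_mono) auto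
  moreover have "((x+1)*(x+2))^2 - 4*(x+1)^3 = ((x+1)*x)^2" by algebra
  moreover have "DD r x = (qb r x)^2 - 4*(x+1)^3" by (simp add: DD_def discrim_def power2_eq_square power3_eq_cube)
  moreover have "((x+1)*x)^2 \<ge> 0" by simp
  ultimately show ?thesis by linarith
qed

definition good :: "real \<Rightarrow> real \<times> real \<Rightarrow> bool" where
  "good r p = (\<exists>S. connected S \<and> \<not> bounded S \<and> S \<subseteq> E_aff r \<and> p \<in> S)"

lemma good_swap: assumes "good r (y,x)" shows "good r (x,y)"
proof -
  obtain S where S: "connected S" "\<not> bounded S" "S \<subseteq> E_aff r" "(y,x) \<in> S"
    using assms good_def by blast
  let ?S = "prod.swap ` S"
  have "connected ?S" using S(1) by (intro connected_continuous_image continuous_intros)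
  moreover have "\<not> bounded ?S"
  proof
    assume "bounded ?S"
    then have "bounded (prod.swap ` ?S)"
      by (rule bounded_linear_image[OF _ bl_swap])
    moreover have "prod.swap ` ?S = S" by (simp add: image_image)
    ultimately show False using S(2) by simp
  qed
  moreover have "?S \<subseteq> E_aff r" using S(3) E_swap by auto
  moreover have "(x,y) \<in> ?S" using S(4) by force
  ultimately show ?thesis unfolding good_def by blast
qed

lemma good_unbounded: assumes "good r p"
  shows "\<not> bounded (connected_component_set (E_aff r) p)"
proof
  assume b: "bounded (connected_component_set (E_aff r) p)"
  obtain S where S: "connected S" "\<not> bounded S" "S \<subseteq> E_aff r" "p \<in> S"
    using assms good_def by blast
  have "S \<subseteq> connected_component_set (E_aff r) p"
    by (rule connected_component_maximal[OF S(4) S(1) S(3)])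
  then show False using b S(2) bounded_subset by blast
qed

lemma Lneg: assumes p: "(x0,y0) \<in> E_aff r" and x0: "x0 < -1" shows "good r (x0,y0)"
proof -
  obtain \<sigma> where sg: "\<sigma> = 1 \<or> \<sigma> = -1" "y0 = rt r \<sigma> x0"
    using rt_cases[of x0 y0 r] p x0 by force
  define S where "S = (\<lambda>x. (x, rt r \<sigma> x)) ` {..x0}"
  have "connected S" unfolding S_def using x0 by (intro graph_conn) auto
  moreover have "S \<subseteq> E_aff r"
  proof
    fix z assume "z \<in> S"
    then obtain x where x: "x \<le> x0" "z = (x, rt r \<sigma> x)" unfolding S_def by auto
    have "(x, rt r \<sigma> x) \<in> E_aff r" using x x0 sg(1) DD_pos_neg[of x r] by (intro rt_in) auto
    then show "z \<in> E_aff r" using x by simp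
  qed
  moreover have "(x0,y0) \<in> S" unfolding S_def using sg(2) by auto
  moreover have "\<not> bounded S"
  proof
    assume "bounded S"
    then obtain M where M: "\<forall>z\<in>S. norm z \<le> M" unfolding Elementary_Metric_Spaces.bounded_iff by blast
    define x where "x = min x0 (-\<bar>M\<bar> - 1)"
    have "(x, rt r \<sigma> x) \<in> S" unfolding S_def x_def by auto
    then have "norm (x, rt r \<sigma> x) \<le> M" using M by blast
    moreover have "norm x \<le> norm (x, rt r \<sigma> x)" by (rule norm_fst_le)
    moreover have "norm x > M" unfolding x_def by auto
    ultimately show False by linarith
  qed
  ultimately show ?thesis unfolding good_def by blast
qed

lemma Lpos: assumes p: "(x0,y0) \<in> E_aff r" and x0: "x0 \<ge> 0" and r: "r \<le> 0" shows "good r (x0,y0)"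
proof -
  obtain \<sigma> where sg: "\<sigma> = 1 \<or> \<sigma> = -1" "y0 = rt r \<sigma> x0"
    using rt_cases[of x0 y0 r] p x0 by force
  define S where "S = (\<lambda>x. (x, rt r \<sigma> x)) ` {x0..}"
  have "connected S" unfolding S_def using x0 by (intro graph_conn) auto
  moreover have "S \<subseteq> E_aff r"
  proof
    fix z assume "z \<in> S"
    then obtain x where x: "x \<ge> x0" "z = (x, rt r \<sigma> x)" unfolding S_def by auto
    have "r * x \<le> 0" using r x x0 by (simp add: mult_nonpos_nonneg)
    then have "(x, rt r \<sigma> x) \<in> E_aff r" using x x0 sg(1) DD_nonneg[of x r] by (intro rt_in) auto
    then show "z \<in> E_aff r" using x by simp
  qed
  moreover have "(x0,y0) \<in> S" unfolding S_def using sg(2) by auto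
  moreover have "\<not> bounded S"
  proof
    assume "bounded S"
    then obtain M where M: "\<forall>z\<in>S. norm z \<le> M" unfolding Elementary_Metric_Spaces.bounded_iff by blast
    define x where "x = max x0 (\<bar>M\<bar> + 1)"
    have "(x, rt r \<sigma> x) \<in> S" unfolding S_def x_def by auto
    then have "norm (x, rt r \<sigma> x) \<le> M" using M by blast
    moreover have "norm x \<le> norm (x, rt r \<sigma> x)" by (rule norm_fst_le)
    moreover have "norm x > M" unfolding x_def by auto
    ultimately show False by linarith
  qed
  ultimately show ?thesis unfolding good_def by blast
qed

lemma rt_zero: "rt r \<sigma> 0 = -1"
  by (simp add: rt_def DD_def qb_def discrim_def)

lemma Lmid: assumes p: "(x0,y0) \<in> E_aff r" and x0: "-1 < x0" "x0 \<le> 0" and r: "r > 0"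
  shows "good r (x0,y0)"
proof -
  obtain \<sigma> where sg: "\<sigma> = 1 \<or> \<sigma> = -1" "y0 = rt r \<sigma> x0"
    using rt_cases[of x0 y0 r] p x0 by force
  define S1 where "S1 = (\<lambda>x. (x, rt r \<sigma> x)) ` {x0..0}"
  define S2 where "S2 = (\<lambda>x. (x, rt r (-1) x)) ` {-1<..0}"
  have inE: "(x, rt r s x) \<in> E_aff r" if "-1 < x" "x \<le> 0" "s = 1 \<or> s = -1" for x s
  proof -
    have "r * x \<le> 0" using r that by (simp add: mult_nonneg_nonpos)
    then show ?thesis using that DD_nonneg[of x r] by (intro rt_in) auto
  qed
  have c1: "connected S1" unfolding S1_def using x0 by (intro graph_conn) auto
  have c2: "connected S2" unfolding S2_def by (intro graph_conn) auto
  have "(0, -1) \<in> S1" unfolding S1_def using x0 rt_zero[of r \<sigma>]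
    by (auto intro!: image_eqI[where x=0])
  moreover have "(0, -1) \<in> S2" unfolding S2_def using rt_zero[of r "-1"]
    by (auto intro!: image_eqI[where x=0])
  ultimately have "connected (S1 \<union> S2)" using c1 c2 by (intro connected_Un) auto
  moreover have "S1 \<union> S2 \<subseteq> E_aff r"
    unfolding S1_def S2_def using x0 sg(1) inE by auto
  moreover have "(x0,y0) \<in> S1 \<union> S2" unfolding S1_def using sg(2) x0 by auto
  moreover have "\<not> bounded (S1 \<union> S2)"
  proof
    assume "bounded (S1 \<union> S2)"
    then have "bounded S2" by (rule bounded_subset) auto
    then obtain M where M: "\<forall>z\<in>S2. norm z \<le> M" unfolding Elementary_Metric_Spaces.bounded_iff by blast
    define M' where "M' = \<bar>M\<bar> + 1"
    have M'pos: "M' > 0" unfolding M'_def by simp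
    define t where "t = min (1/2) (r/(4*M'))"
    have tpos: "t > 0" unfolding t_def using r M'pos by simp
    have th: "t \<le> 1/2" unfolding t_def by simp
    have "t \<le> r/(4*M')" unfolding t_def by simp
    then have t4: "t*(4*M') \<le> r" using M'pos by (simp add: pos_le_divide_eq)
    define x where "x = -1 + t"
    have xr: "-1 < x" "x \<le> 0" unfolding x_def using tpos th by auto
    define y where "y = rt r (-1) x"
    have "(x, y) \<in> S2" unfolding S2_def y_def using xr by auto
    then have "norm (x, y) \<le> M" using M by blast
    moreover have "norm y \<le> norm (x, y)" by (rule norm_snd_le)
    moreover have "y \<le> -M'"
    proof (rule ccontr)
      assume "\<not> y \<le> -M'"
      then have "y * (2*t) > (-M') * (2*t)" using tpos by (intro mult_strict_right_mono) auto
      moreover have "(-M')*(2*t) \<ge> -r/2" using t4 by (simp add: algebra_simps)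
      moreover have "y * (2*t) = -qb r x - sqrt (DD r x)"
        unfolding y_def rt_def using tpos by (simp add: x_def field_simps)
      moreover have "qb r x \<ge> r/2"
      proof -
        have "(x+1)*(x+2) \<ge> 0" using xr by simp
        moreover have "-r*x \<ge> r/2"
        proof -
          have "-x \<ge> 1/2" using th x_def by simp
          then have "r*(-x) \<ge> r*(1/2)" using r by (intro mult_left_mono) auto
          then show ?thesis by simp
        qed
        ultimately show ?thesis unfolding qb_def by linarith
      qed
      moreover have "sqrt (DD r x) \<ge> 0"
      proof -
        have "r * x \<le> 0" using r xr by (simp add: mult_nonneg_nonpos)
        then have "DD r x \<ge> 0" using xr by (intro DD_nonneg) auto
        then show ?thesis by simp
      qed
      ultimately show False by linarith
    qed
    ultimately show False unfolding M'_def by auto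
  qed
  ultimately show ?thesis unfolding good_def by blast
qed



lemma Eeq: "(x,y) \<in> E_aff r \<longleftrightarrow> (x + 1) * (y + 1) * (x + y + 1) = r * x * y"
  by (simp add: E_aff_def)

lemma NotU_pos:
  assumes r: "r > 0" and p: "(x,y) \<in> E_aff r" and nU: "\<not> (x > 0 \<and> y > 0)"
  shows "good r (x,y)"
proof -
  have m1: "y = 0" if "x = -1" using p that r by (simp add: Eeq)
  have m2: "x = 0" if "y = -1" using p that r by (simp add: Eeq)
  have ps: "(y,x) \<in> E_aff r" using p by (rule E_swap)
  have z: "(0::real,-1::real) \<in> E_aff r" by (simp add: Eeq)
  consider "x < -1" | "x = -1" | "-1 < x \<and> x \<le> 0" | "x > 0" by linarith
  then show ?thesis
  proof cases
    case 1 then show ?thesis using Lneg p by blast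
  next
    case 2
    then have "y = 0" using m1 by blast
    have "good r (0,-1)" using Lmid[OF z] r by simp
    then show ?thesis using good_swap 2 \<open>y = 0\<close> by blast
  next
    case 3 then show ?thesis using Lmid p r by blast
  next
    case 4
    then have "y \<le> 0" using nU by auto
    consider "y < -1" | "y = -1" | "-1 < y \<and> y \<le> 0" using \<open>y \<le> 0\<close> by linarith
    then show ?thesis
    proof cases
      case 1 then show ?thesis using Lneg[OF ps] good_swap by blast
    next
      case 2 then show ?thesis using m2 4 by simp
    next
      case 3 then show ?thesis using Lmid[OF ps] r good_swap by blast
    qed
  qed
qed

lemma NotU_neg:
  assumes r: "r < 0" and p: "(x,y) \<in> E_aff r" and nU: "\<not> (x > -1 \<and> y > -1 \<and> x + y < -1)"
  shows "good r (x,y)"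
proof -
  have m1: "y = 0" if "x = -1" using p that r by (simp add: Eeq)
  have m2: "x = 0" if "y = -1" using p that r by (simp add: Eeq)
  have ps: "(y,x) \<in> E_aff r" using p by (rule E_swap)
  have z: "(0::real,-1::real) \<in> E_aff r" by (simp add: Eeq)
  have rle: "r \<le> 0" using r by simp
  consider "x < -1" | "x = -1" | "-1 < x \<and> x < 0" | "x \<ge> 0" by linarith
  then show ?thesis
  proof cases
    case 1 then show ?thesis using Lneg p by blast
  next
    case 2
    then have "y = 0" using m1 by blast
    have "good r (0,-1)" using Lpos[OF z] rle by simp
    then show ?thesis using good_swap 2 \<open>y = 0\<close> by blast
  next
    case 3
    note xc = 3
    consider "y < -1" | "y = -1" | "-1 < y \<and> y < 0" | "y \<ge> 0" by linarith
    then show ?thesis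
    proof cases
      case 1 then show ?thesis using Lneg[OF ps] good_swap by blast
    next
      case 2 then show ?thesis using m2 xc by simp
    next
      case 4 then show ?thesis using Lpos[OF ps] rle good_swap by blast
    next
      case 3
      then have s: "x + y + 1 \<ge> 0" using nU xc by auto
      have "(x + 1) * (y + 1) * (x + y + 1) \<ge> 0" using 3 xc s by simp
      moreover have "x * y > 0" using 3 xc by (simp add: mult_neg_neg)
      then have "r * (x * y) < 0" using r by (simp add: mult_neg_pos)
      ultimately show ?thesis using p by (simp add: Eeq mult.assoc)
    qed
  next
    case 4 then show ?thesis using Lpos p rle by blast
  qed
qed

lemma comp_in_U:
  assumes oU: "open U" and cK: "closed K" and EU: "E \<inter> U \<subseteq> K" and EK: "E \<inter> K \<subseteq> U"
    and pU: "p \<in> U" and pE: "p \<in> E"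
  shows "connected_component_set E p \<subseteq> U"
proof -
  let ?C = "connected_component_set E p"
  have cC: "connected ?C" by simp
  have CE: "?C \<subseteq> E" by (rule connected_component_subset)
  have pC: "p \<in> ?C" using pE by simp
  have "U \<inter> ?C = {} \<or> (- K) \<inter> ?C = {}"
  proof (rule connectedD[OF cC oU])
    show "open (- K)" using cK by (simp add: open_Compl)
    show "U \<inter> - K \<inter> ?C = {}" using CE EU by blast
    show "?C \<subseteq> U \<union> - K" using CE EK by blast
  qed
  then have "(- K) \<inter> ?C = {}" using pU pC by blast
  then show ?thesis using CE EK by blast
qed

lemma EU_pos_x: assumes r: "r > 0" and p: "(x,y) \<in> E_aff r" and xy: "x > 0" "y > 0"
  shows "1/r \<le> x"
proof -
  have "(x+1)*(x+y+1) > 1*1" using xy by (intro mult_strict_mono) auto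
  then have "(y+1)*((x+1)*(x+y+1)) > (y+1)*1" using xy by (intro mult_strict_left_mono) auto
  then have "r*x*y > y" using p by (simp add: Eeq algebra_simps)
  then have "(r*x)*y > 1*y" by (simp add: mult.assoc)
  then have "r*x > 1" using xy(2) by (simp add: mult_less_cancel_right)
  then show ?thesis using r by (simp add: divide_le_eq mult.commute)
qed

lemma EU_neg_x: assumes r: "r < 0" and p: "(x,y) \<in> E_aff r"
  and xy: "x > -1" "y > -1" "x + y < -1"
  shows "r * x \<le> x + 1"
proof -
  have y0: "y < 0" using xy by linarith
  define w where "w = -(x+y+1)"
  have w0: "w > 0" "w < -y" unfolding w_def using xy by auto
  have "(y+1)*w < 1*w" using w0 y0 by (intro mult_strict_right_mono) auto
  then have "(y+1)*w < -y" using w0 by linarith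
  then have "(x+1)*((y+1)*w) < (x+1)*(-y)" using xy by (intro mult_strict_left_mono) auto
  moreover have "(x+1)*((y+1)*w) = - (r*x*y)" using p unfolding w_def by (simp add: Eeq algebra_simps)
  ultimately have "(r*x)*y > (x+1)*y" by (simp add: algebra_simps)
  then have "r*x < x+1" using y0 by (simp add: mult_less_cancel_right)
  then show ?thesis by simp
qed

lemma r_plus_pos: "r_plus > 0"
  unfolding r_plus_def by (simp add: add_pos_nonneg)

theorem mainTheorem4:
  fixes r :: real and p q :: "real \<times> real"
  assumes "r \<in> {r_minus<..<0} \<union> {r_plus<..}"
    and "p \<in> E_aff r"
    and "bounded (connected_component_set (E_aff r) p)"
    and "q \<in> connected_component_set (E_aff r) p"
    and "T2_defined_at q"
  shows "T (T q) \<in> E_aff r - connected_component_set (E_aff r) p"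
proof -
  let ?C = "connected_component_set (E_aff r) p"
  have qE: "q \<in> E_aff r" using assms(4) connected_component_subset by blast
  have dTq: "T_defined_at (T q)" using assms(5) by (simp add: T2_defined_at_def)
  obtain x0 y0 where pd: "p = (x0,y0)" by (cases p)
  have ng: "\<not> good r p" using good_unbounded assms(3) by blast
  consider "r < 0" | "r > 0" using assms(1) r_plus_pos by auto
  then show ?thesis
  proof cases
    case 2
    define U where "U = {z::real\<times>real. 0 < fst z \<and> 0 < snd z}"
    define K where "K = {z::real\<times>real. 1/r \<le> fst z \<and> 1/r \<le> snd z}"
    have oU: "open U" unfolding U_def
      by (intro open_Collect_conj open_Collect_less continuous_intros)
    have cK: "closed K" unfolding K_def
      by (intro closed_Collect_conj closed_Collect_le continuous_intros)
    have EU: "E_aff r \<inter> U \<subseteq> K"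
    proof
      fix z assume z: "z \<in> E_aff r \<inter> U"
      obtain x y where zd: "z = (x,y)" by (cases z)
      have "(x,y) \<in> E_aff r" "x > 0" "y > 0" using z zd U_def by auto
      then have "1/r \<le> x" "1/r \<le> y" using EU_pos_x[OF 2] E_swap by blast+
      then show "z \<in> K" using zd K_def by simp
    qed
    have EK: "E_aff r \<inter> K \<subseteq> U"
    proof
      fix z assume "z \<in> E_aff r \<inter> K"
      then have a: "1/r \<le> fst z" "1/r \<le> snd z" unfolding K_def by auto
      have pos: "1/r > 0" using 2 by simp
      show "z \<in> U" unfolding U_def using less_le_trans[OF pos a(1)] less_le_trans[OF pos a(2)] by simp
    qed
    have pU: "p \<in> U"
    proof (rule ccontr)
      assume "p \<notin> U"
      then have "\<not> (x0 > 0 \<and> y0 > 0)" using pd U_def by auto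
      then have "good r p" using NotU_pos[OF 2] assms(2) pd by blast
      then show False using ng by blast
    qed
    have CU: "?C \<subseteq> U" by (rule comp_in_U[OF oU cK EU EK pU assms(2)])
    have qU: "q \<in> U" using CU assms(4) by blast
    have "T (T q) \<in> E_aff r"
      using T2_in_E[OF qE] 2 qU assms(5) unfolding U_def by auto
    moreover have "T (T q) \<notin> U" using L1[OF dTq] unfolding U_def by auto
    ultimately show ?thesis using CU by blast
  next
    case 1
    define U where "U = {z::real\<times>real. -1 < fst z \<and> -1 < snd z \<and> fst z + snd z < -1}"
    define K where "K = {z::real\<times>real. fst z \<le> 0 \<and> snd z \<le> 0 \<and> r * fst z \<le> fst z + 1
        \<and> r * snd z \<le> snd z + 1 \<and> fst z + snd z + 1 \<le> 0}"
    have oU: "open U" unfolding U_def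
      by (intro open_Collect_conj open_Collect_less continuous_intros)
    have cK: "closed K" unfolding K_def
      by (intro closed_Collect_conj closed_Collect_le continuous_intros)
    have EU: "E_aff r \<inter> U \<subseteq> K"
    proof
      fix z assume z: "z \<in> E_aff r \<inter> U"
      obtain x y where zd: "z = (x,y)" by (cases z)
      have h: "(x,y) \<in> E_aff r" "x > -1" "y > -1" "x + y < -1" using z zd U_def by auto
      have "r * x \<le> x + 1" using EU_neg_x[OF 1 h] .
      moreover have "r * y \<le> y + 1" using EU_neg_x[OF 1 E_swap[OF h(1)]] h by simp
      ultimately show "z \<in> K" using zd K_def h by simp
    qed
    have EK: "E_aff r \<inter> K \<subseteq> U"
    proof
      fix z assume z: "z \<in> E_aff r \<inter> K"
      obtain x y where zd: "z = (x,y)" by (cases z)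
      have h: "(x,y) \<in> E_aff r" "x \<le> 0" "y \<le> 0" "r*x \<le> x+1" "r*y \<le> y+1" "x+y+1 \<le> 0"
        using z zd K_def by auto
      have rx: "r*x \<ge> 0" "r*y \<ge> 0" using 1 h by (simp_all add: mult_nonpos_nonpos)
      have x1: "x > -1"
      proof (rule ccontr)
        assume "\<not> x > -1"
        then have "x = -1" using h rx by linarith
        then show False using h 1 by simp
      qed
      have y1: "y > -1"
      proof (rule ccontr)
        assume "\<not> y > -1"
        then have "y = -1" using h rx by linarith
        then show False using h 1 by simp
      qed
      have "x + y + 1 \<noteq> 0"
      proof
        assume s0: "x + y + 1 = 0"
        then have "r * x * y = 0" using h(1) by (simp add: Eeq)
        then have "x = 0 \<or> y = 0" using 1 by simp
        then show False using s0 x1 y1 by auto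
      qed
      then show "z \<in> U" using zd U_def x1 y1 h by auto
    qed
    have pU: "p \<in> U"
    proof (rule ccontr)
      assume "p \<notin> U"
      then have "\<not> (x0 > -1 \<and> y0 > -1 \<and> x0 + y0 < -1)" using pd U_def by auto
      then have "good r p" using NotU_neg[OF 1] assms(2) pd by blast
      then show False using ng by blast
    qed
    have CU: "?C \<subseteq> U" by (rule comp_in_U[OF oU cK EU EK pU assms(2)])
    have qU: "q \<in> U" using CU assms(4) by blast
    then have "fst q < 0" "snd q < 0" unfolding U_def by auto
    then have "T (T q) \<in> E_aff r"
      using T2_in_E[OF qE] 1 assms(5) by auto
    moreover have "T (T q) \<notin> U" using L2[OF dTq] unfolding U_def by auto
    ultimately show ?thesis using CU by blast
  qed
qed


end
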